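(* In the setting below, every holomorphic function $f:\mathbb H\times\mathbb C^n\to\mathbb C$ which is invariant under $H_M$ (i.e. $f\circ g=f$ for all $g\in H_M$) is constant.
   Context: Let $n\ge 1$ and let $M=(m_{ij})\in SL(2n+1,\mathbb Z)$. Assume that $M$ has exactly one real eigenvalue $\alpha$, that $\alpha>0$, $\alpha\neq 1$, that $\alpha$ is a simple eigenvalue, and that the remaining eigenvalues are $\beta_1,\dots,\beta_k,\bar\beta_1,\dots,\bar\beta_k$ with $\mathrm{Im}\,\beta_j>0$. Let $W\subset\mathbb C^{2n+1}$ be the direct sum of the generalized eigenspaces of $M$ for $\beta_1,\dots,\beta_k$ (so $\dim_{\mathbb C}W=n$). Fix a real eigenvector $a=(a^{(1)},\dots,a^{(2n+1)})^\top\in\mathbb R^{2n+1}$ of $M$ for $\alpha$ and a basis $b_1,\dots,b_n$ of $W$, $b_j=(b_j^{(1)},\dots,b_j^{(2n+1)})^\top$. For $i=1,\dots,2n+1$ put $u_i=(a^{(i)},b_1^{(i)},\dots,b_n^{(i)})^\top\in\mathbb R\times\mathbb C^n$. Let $\mathbb H=\{w\in\mathbb C:\mathrm{Im}\,w>0\}$, define $g_i(w,z)=(w,z)+u_i$ on $\mathbb H\times\mathbb C^n$ for $1\le i\le 2n+1$, and let $H_M$ be the group generated by $g_1,\dots,g_{2n+1}$. *)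

theory Defs
  imports "HOL-Analysis.Analysis"
begin

definition cmat :: "int^'m^'m \<Rightarrow> complex^'m^'m" where
  "cmat M = (\<chi> i j. of_int (M $ i $ j))"

definition rmat :: "int^'m^'m \<Rightarrow> real^'m^'m" where
  "rmat M = (\<chi> i j. of_int (M $ i $ j))"

definition is_eigenvalue :: "complex^'m^'m \<Rightarrow> complex \<Rightarrow> bool" where
  "is_eigenvalue A l \<longleftrightarrow> (\<exists>v. v \<noteq> 0 \<and> A *v v = l *s v)"

definition gen_eigenspace :: "complex^'m^'m \<Rightarrow> complex \<Rightarrow> (complex^'m) set" where
  "gen_eigenspace A l = {v. \<exists>k. ((\<lambda>x. A *v x - l *s x) ^^ k) v = 0}"

(* holomorphic function of several complex variables on an open set U of C x C^n:
   complex (Frechet) differentiable at every point of U *)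
definition holo_several :: "(complex \<times> (complex^'n) \<Rightarrow> complex) \<Rightarrow> (complex \<times> (complex^'n)) set \<Rightarrow> bool" where
  "holo_several f U \<longleftrightarrow> open U \<and> (\<forall>p\<in>U. \<exists>f'. (f has_derivative f') (at p) \<and>
      (\<forall>c w z. f' (c * w, c *s z) = c * f' (w, z)))"

definition HxC :: "(complex \<times> (complex^'n)) set" where
  "HxC = {p. Im (fst p) > 0}"

inductive_set gen_group :: "('a \<Rightarrow> 'a) set \<Rightarrow> ('a \<Rightarrow> 'a) set" for S where
  gg_id: "id \<in> gen_group S"
| gg_gen: "g \<in> gen_group S \<Longrightarrow> s \<in> S \<Longrightarrow> s \<circ> g \<in> gen_group S"
| gg_inv: "g \<in> gen_group S \<Longrightarrow> s \<in> S \<Longrightarrow> inv s \<circ> g \<in> gen_group S"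

definition gmap :: "real^'m \<Rightarrow> ('n \<Rightarrow> complex^'m) \<Rightarrow> 'm \<Rightarrow> complex \<times> (complex^'n) \<Rightarrow> complex \<times> (complex^'n)" where
  "gmap a b i = (\<lambda>(w, z). (w + of_real (a $ i), z + (\<chi> j. b j $ i)))"

definition H_M :: "real^'m \<Rightarrow> ('n \<Rightarrow> complex^'m) \<Rightarrow> (complex \<times> (complex^'n) \<Rightarrow> complex \<times> (complex^'n)) set" where
  "H_M a b = gen_group (range (gmap a b))"

end

theory Submission
  imports Defs "HOL-Complex_Analysis.Cauchy_Integral_Formula"
begin

definition Tm :: "complex^'m^'m \<Rightarrow> complex \<Rightarrow> complex^'m \<Rightarrow> complex^'m" where
  "Tm A l v = A *v v - l *s v"

fun opl :: "complex^'m^'m \<Rightarrow> complex list \<Rightarrow> complex^'m \<Rightarrow> complex^'m" where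
  "opl A [] v = v"
| "opl A (l # ls) v = Tm A l (opl A ls v)"

lemma mv_scale: "A *v (c *s v) = c *s (A *v (v::complex^'m))"
  by (simp add: vec_eq_iff matrix_vector_mult_def sum_distrib_left algebra_simps)

lemma Tm_add: "Tm A l (u + v) = Tm A l u + Tm A l v"
  by (simp add: Tm_def matrix_vector_right_distrib vector_ssub_ldistrib scaleR_right_distrib vec_eq_iff algebra_simps)

lemma Tm_scale: "Tm A l (c *s v) = c *s Tm A l v"
  by (simp add: Tm_def mv_scale vec_eq_iff algebra_simps)

lemma Tm_zero: "Tm A l 0 = 0"
  by (simp add: Tm_def)

lemma opl_add: "opl A xs (u + v) = opl A xs u + opl A xs v"
  by (induct xs) (auto simp: Tm_add)

lemma opl_scale: "opl A xs (c *s v) = c *s opl A xs v"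
  by (induct xs) (auto simp: Tm_scale)

lemma opl_zero: "opl A xs 0 = 0"
  by (induct xs) (auto simp: Tm_zero)

lemma Tm_comm: "Tm A l (Tm A m v) = Tm A m (Tm A l v)"
proof -
  have "A *v (A *v v - m *s v) = A *v (A *v v) - m *s (A *v v)"
    by (simp add: matrix_vector_right_distrib vec_eq_iff matrix_vector_mult_def sum_subtractf sum_distrib_left algebra_simps)
  moreover have "A *v (A *v v - l *s v) = A *v (A *v v) - l *s (A *v v)"
    by (simp add: matrix_vector_right_distrib vec_eq_iff matrix_vector_mult_def sum_subtractf sum_distrib_left algebra_simps)
  ultimately show ?thesis by (simp add: Tm_def vec_eq_iff algebra_simps)
qed

lemma Tm_opl_comm: "Tm A l (opl A ls v) = opl A ls (Tm A l v)"
  by (induct ls) (auto simp: Tm_comm)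

lemma opl_append: "opl A (xs @ ys) v = opl A xs (opl A ys v)"
  by (induct xs) auto

lemma opl_comm: "opl A xs (opl A ys v) = opl A ys (opl A xs v)"
  by (induct xs arbitrary: v) (auto simp: Tm_opl_comm)

lemma gen_opl: "((\<lambda>x. A *v x - l *s x) ^^ k) v = opl A (replicate k l) v"
  by (induct k) (auto simp: Tm_def)

lemma eigen_opl: "Tm A \<mu> u = 0 \<Longrightarrow> opl A ys u = (\<Prod>l\<leftarrow>ys. (\<mu> - l)) *s u"
proof (induct ys)
  case Nil then show ?case by simp
next
  case (Cons l ys)
  have e: "Tm A l u = (\<mu> - l) *s u" using Cons(2) by (simp add: Tm_def vec_eq_iff algebra_simps)
  have "opl A (l # ys) u = Tm A l ((\<Prod>l\<leftarrow>ys. (\<mu> - l)) *s u)" using Cons by simp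
  also have "\<dots> = (\<Prod>l\<leftarrow>ys. (\<mu> - l)) *s ((\<mu> - l) *s u)" by (simp add: Tm_scale e)
  finally show ?case by (simp add: vec_eq_iff algebra_simps)
qed

lemma single_zero: "Tm A \<mu> u = 0 \<Longrightarrow> \<mu> \<notin> set ys \<Longrightarrow> opl A ys u = 0 \<Longrightarrow> u = 0"
proof -
  assume a: "Tm A \<mu> u = 0" "\<mu> \<notin> set ys" "opl A ys u = 0"
  have "(\<Prod>l\<leftarrow>ys. (\<mu> - l)) \<noteq> 0" using a(2) by (induct ys) auto
  with a eigen_opl[OF a(1), of ys] show "u = 0" by (simp add: vec_eq_iff)
qed

lemma disj_zero: "set xs \<inter> set ys = {} \<Longrightarrow> opl A xs v = 0 \<Longrightarrow> opl A ys v = 0 \<Longrightarrow> v = 0"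
proof (induct xs arbitrary: v)
  case Nil then show ?case by simp
next
  case (Cons l xs)
  let ?u = "opl A xs v"
  have "Tm A l ?u = 0" using Cons by simp
  moreover have "opl A ys ?u = 0" using Cons(4) by (simp add: opl_comm opl_zero)
  ultimately have "?u = 0" using single_zero Cons(2) by fastforce
  then show ?case using Cons by auto
qed

definition Kset :: "complex^'m^'m \<Rightarrow> complex set \<Rightarrow> (complex^'m) set" where
  "Kset A S = {v. \<exists>xs. set xs \<subseteq> S \<and> opl A xs v = 0}"

lemma Kset_subspace: "vec.subspace (Kset A S)"
  unfolding vec.subspace_def Kset_def
proof (intro conjI allI ballI impI)
  show "0 \<in> {v. \<exists>xs. set xs \<subseteq> S \<and> opl A xs v = 0}" by (auto intro: exI[of _ "[]"])
next
  fix c :: complex and x assume "x \<in> {v. \<exists>xs. set xs \<subseteq> S \<and> opl A xs v = 0}"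
  then show "c *s x \<in> {v. \<exists>xs. set xs \<subseteq> S \<and> opl A xs v = 0}" by (auto simp: opl_scale)
next
  fix x y assume "x \<in> {v. \<exists>xs. set xs \<subseteq> S \<and> opl A xs v = 0}" "y \<in> {v. \<exists>xs. set xs \<subseteq> S \<and> opl A xs v = 0}"
  then obtain xs ys where "set xs \<subseteq> S" "opl A xs x = 0" "set ys \<subseteq> S" "opl A ys y = 0" by auto
  then show "x + y \<in> {v. \<exists>xs. set xs \<subseteq> S \<and> opl A xs v = 0}"
    by (intro CollectI exI[of _ "xs @ ys"]) (auto simp: opl_append opl_add opl_zero opl_comm[of A xs ys])
qed

lemma gen_Kset: "l \<in> S \<Longrightarrow> gen_eigenspace A l \<subseteq> Kset A S"
proof
  fix v assume l: "l \<in> S" and "v \<in> gen_eigenspace A l"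
  then obtain k where "opl A (replicate k l) v = 0" by (auto simp: gen_eigenspace_def gen_opl)
  then show "v \<in> Kset A S" unfolding Kset_def using l by (intro CollectI exI[of _ "replicate k l"]) auto
qed

lemma Kset_mono: "S \<subseteq> S' \<Longrightarrow> Kset A S \<subseteq> Kset A S'"
  by (auto simp: Kset_def)

lemma Kset_disj: "S \<inter> S' = {} \<Longrightarrow> v \<in> Kset A S \<Longrightarrow> v \<in> Kset A S' \<Longrightarrow> v = 0"
  unfolding Kset_def using disj_zero by blast

definition cv :: "complex^'m \<Rightarrow> complex^'m" where
  "cv v = (\<chi> i. cnj (v $ i))"

lemma cv_cv[simp]: "cv (cv v) = v"
  by (simp add: cv_def vec_eq_iff)

lemma inj_cv: "inj cv"
  by (metis cv_cv injI)

lemma cv_add: "cv (u + v) = cv u + cv v" and cv_scale: "cv (c *s v) = cnj c *s cv v"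
  and cv_zero: "cv 0 = 0" and cv_sum: "cv (sum f F) = sum (\<lambda>x. cv (f x)) F"
  by (simp_all add: cv_def vec_eq_iff sum_component)

lemma cv_Tm: "cv (Tm (cmat M) l v) = Tm (cmat M) (cnj l) (cv v)"
  by (simp add: cv_def Tm_def vec_eq_iff matrix_vector_mult_def cmat_def)

lemma cv_opl: "cv (opl (cmat M) xs v) = opl (cmat M) (map cnj xs) (cv v)"
  by (induct xs) (auto simp: cv_Tm)

lemma cv_Kset: "v \<in> Kset (cmat M) {l. Im l > 0} \<Longrightarrow> cv v \<in> Kset (cmat M) {l. Im l < 0}"
  unfolding Kset_def
proof safe
  fix xs assume "set xs \<subseteq> {l. Im l > 0}" "opl (cmat M) xs v = 0"
  then show "\<exists>xs. set xs \<subseteq> {l. Im l < 0} \<and> opl (cmat M) xs (cv v) = 0"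
    by (intro exI[of _ "map cnj xs"]) (auto simp: cv_opl[symmetric] cv_zero)
qed

lemma cv_independent: assumes "vec.independent X" shows "vec.independent (cv ` X)"
proof -
  have fin: "finite X" using assms vec.independent_explicit by blast
  show ?thesis unfolding vec.independent_explicit
  proof (intro conjI allI impI ballI)
    show "finite (cv ` X)" using fin by simp
  next
    fix c v assume s: "(\<Sum>v\<in>cv ` X. c v *s v) = 0" and v: "v \<in> cv ` X"
    have "(\<Sum>v\<in>cv ` X. c v *s v) = (\<Sum>x\<in>X. c (cv x) *s cv x)"
      by (subst sum.reindex) (auto intro: inj_on_subset[OF inj_cv])
    then have "cv (\<Sum>x\<in>X. c (cv x) *s cv x) = 0" using s by (simp add: cv_zero)
    then have E: "(\<Sum>x\<in>X. cnj (c (cv x)) *s x) = 0" by (simp add: cv_sum cv_scale)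
    have H: "\<forall>c. (\<Sum>v\<in>X. c v *s v) = 0 \<longrightarrow> (\<forall>v\<in>X. c v = 0)"
      using assms vec.independent_explicit by blast
    have "\<forall>x\<in>X. cnj (c (cv x)) = 0" using H[rule_format, OF E] by blast
    then show "c v = 0" using v by auto
  qed
qed

lemma indep_Un:
  assumes "vec.independent (S::(complex^'m) set)" "vec.independent T"
    and "\<And>v. v \<in> vec.span S \<Longrightarrow> v \<in> vec.span T \<Longrightarrow> v = 0"
  shows "vec.independent (S \<union> T)" "S \<inter> T = {}"
proof -
  show disj: "S \<inter> T = {}"
  proof (rule ccontr)
    assume "S \<inter> T \<noteq> {}"
    then obtain v where "v \<in> S" "v \<in> T" by auto
    then have "v = 0" using assms(3) vec.span_base by metis
    then show False using \<open>v \<in> S\<close> assms(1) vec.dependent_zero by blast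
  qed
  have fS: "finite S" and fT: "finite T" using assms vec.independent_explicit by blast+
  show "vec.independent (S \<union> T)" unfolding vec.independent_explicit
  proof (intro conjI allI impI ballI)
    show "finite (S \<union> T)" using fS fT by simp
  next
    fix c v assume s: "(\<Sum>v\<in>S \<union> T. c v *s v) = 0" and v: "v \<in> S \<union> T"
    have "(\<Sum>v\<in>S \<union> T. c v *s v) = (\<Sum>v\<in>S. c v *s v) + (\<Sum>v\<in>T. c v *s v)"
      using disj fS fT by (simp add: sum.union_disjoint)
    then have e: "(\<Sum>v\<in>S. c v *s v) = - (\<Sum>v\<in>T. c v *s v)" using s by (simp add: eq_neg_iff_add_eq_0)
    have "(\<Sum>v\<in>S. c v *s v) \<in> vec.span S" by (simp add: vec.span_base vec.span_scale vec.span_sum)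
    moreover have "(\<Sum>v\<in>S. c v *s v) \<in> vec.span T" unfolding e
      by (intro vec.span_neg) (simp add: vec.span_base vec.span_scale vec.span_sum)
    ultimately have z: "(\<Sum>v\<in>S. c v *s v) = 0" using assms(3) by blast
    then have z2: "(\<Sum>v\<in>T. c v *s v) = 0" using e by simp
    show "c v = 0" using v z z2 assms(1,2) fS fT vec.independent_explicit by blast
  qed
qed

lemma span_all:
  fixes aC :: "complex^'m" and b :: "'n::finite \<Rightarrow> complex^'m"
  assumes aK: "aC \<in> Kset (cmat M) {al}" and alr: "Im al = 0" and anz: "aC \<noteq> 0"
    and bK: "range b \<subseteq> Kset (cmat M) {l. Im l > 0}"
    and indb: "vec.independent (range b)" and injb: "inj b"
    and dim: "CARD('m) = 2 * CARD('n) + 1"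
  shows "vec.span (insert aC (range b \<union> cv ` range b)) = UNIV"
proof -
  let ?P = "range b" and ?Q = "cv ` range b" and ?K = "Kset (cmat M)"
  have indQ: "vec.independent ?Q" by (rule cv_independent[OF indb])
  have sP: "vec.span ?P \<subseteq> ?K {l. Im l > 0}" by (rule vec.span_minimal[OF bK Kset_subspace])
  have "?Q \<subseteq> ?K {l. Im l < 0}" using bK cv_Kset by blast
  then have sQ: "vec.span ?Q \<subseteq> ?K {l. Im l < 0}" by (rule vec.span_minimal[OF _ Kset_subspace])
  have d1: "{l. Im l > 0} \<inter> {l. Im l < 0} = {}" by auto
  have hPQ: "\<And>v. v \<in> vec.span ?P \<Longrightarrow> v \<in> vec.span ?Q \<Longrightarrow> v = 0"
    using sP sQ Kset_disj[OF d1] by blast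
  note PQ = indep_Un[OF indb indQ hPQ]
  have m1: "?K {l. Im l > 0} \<subseteq> ?K {l. Im l \<noteq> 0}" by (rule Kset_mono) auto
  have m2: "?K {l. Im l < 0} \<subseteq> ?K {l. Im l \<noteq> 0}" by (rule Kset_mono) auto
  have "?P \<union> ?Q \<subseteq> ?K {l. Im l \<noteq> 0}"
    using bK \<open>?Q \<subseteq> ?K {l. Im l < 0}\<close> m1 m2 by blast
  then have sPQ: "vec.span (?P \<union> ?Q) \<subseteq> ?K {l. Im l \<noteq> 0}" by (rule vec.span_minimal[OF _ Kset_subspace])
  have sA: "vec.span {aC} \<subseteq> ?K {al}" using aK by (intro vec.span_minimal[OF _ Kset_subspace]) auto
  have indA: "vec.independent {aC}" using anz by (simp add: vec.independent_insert)
  have dA: "{l. Im l \<noteq> 0} \<inter> {al} = {}" using alr by auto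
  have hB: "\<And>v. v \<in> vec.span {aC} \<Longrightarrow> v \<in> vec.span (?P \<union> ?Q) \<Longrightarrow> v = 0"
    using sA sPQ Kset_disj[OF dA] by blast
  note B = indep_Un[OF indA PQ(1) hB]
  have cP: "card ?P = CARD('n)" using injb by (simp add: card_image)
  have cQ: "card ?Q = CARD('n)" using cP card_image[OF inj_on_subset[OF inj_cv subset_UNIV]] by metis
  have "card ({aC} \<union> (?P \<union> ?Q)) = 1 + (card ?P + card ?Q)"
    using B(2) PQ(2) by (simp add: card_Un_disjoint)
  then have "card ({aC} \<union> (?P \<union> ?Q)) = CARD('m)" using cP cQ dim by simp
  then have "UNIV \<subseteq> vec.span ({aC} \<union> (?P \<union> ?Q))"
    using vec.card_ge_dim_independent[OF _ B(1), of UNIV] vec_dim_card[where 'a=complex and 'n='m] by simp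
  then show ?thesis by auto
qed

lemma L_inj:
  fixes a x :: "real^'m" and b :: "'n::finite \<Rightarrow> complex^'m"
  assumes span: "vec.span (insert (\<chi> i. complex_of_real (a$i)) (range b \<union> cv ` range b)) = UNIV"
    and xa: "(\<Sum>i\<in>UNIV. x$i * a$i) = 0"
    and xb: "\<And>j. (\<Sum>i\<in>UNIV. complex_of_real (x$i) * b j $ i) = 0"
  shows "x = 0"
proof -
  let ?S = "{v::complex^'m. (\<Sum>i\<in>UNIV. complex_of_real (x$i) * v $ i) = 0}"
  have sub: "vec.subspace ?S" unfolding vec.subspace_def
  proof (intro conjI ballI allI)
    show "0 \<in> ?S" by simp
  next
    fix u v assume "u \<in> ?S" "v \<in> ?S"
    then show "u + v \<in> ?S" by (simp add: distrib_left sum.distrib)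
  next
    fix c :: complex and u assume "u \<in> ?S"
    moreover have "(\<Sum>i\<in>UNIV. complex_of_real (x$i) * (c *s u) $ i) = c * (\<Sum>i\<in>UNIV. complex_of_real (x$i) * u $ i)"
      by (simp add: sum_distrib_left algebra_simps)
    ultimately show "c *s u \<in> ?S" by simp
  qed
  have "(\<Sum>i\<in>UNIV. complex_of_real (x$i) * complex_of_real (a$i)) = complex_of_real (\<Sum>i\<in>UNIV. x$i * a$i)"
    by simp
  then have "(\<chi> i. complex_of_real (a$i)) \<in> ?S" using xa by simp
  moreover have "range b \<subseteq> ?S" using xb by auto
  moreover have "cv (b j) \<in> ?S" for j
  proof -
    have "(\<Sum>i\<in>UNIV. complex_of_real (x$i) * cv (b j) $ i) = cnj (\<Sum>i\<in>UNIV. complex_of_real (x$i) * b j $ i)"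
      by (simp add: cv_def)
    then show "cv (b j) \<in> ?S" using xb by simp
  qed
  then have "cv ` range b \<subseteq> ?S" by auto
  ultimately have "UNIV \<subseteq> ?S" using vec.span_minimal[OF _ sub, of "insert (\<chi> i. complex_of_real (a$i)) (range b \<union> cv ` range b)"] span
    by auto
  then have "\<And>k. axis k 1 \<in> ?S" by blast
  then have "\<And>k. x $ k = 0" by (simp add: axis_def if_distrib cong: if_cong)
  then show ?thesis by (simp add: vec_eq_iff)
qed


definition Lmap :: "real^'m \<Rightarrow> ('n \<Rightarrow> complex^'m) \<Rightarrow> real^'m \<Rightarrow> real \<times> (complex^'n)" where
  "Lmap a b x = ((\<Sum>i\<in>UNIV. x$i * a$i), (\<chi> j. \<Sum>i\<in>UNIV. complex_of_real (x$i) * b j $ i))"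

definition tr :: "real \<times> (complex^'n) \<Rightarrow> complex \<times> (complex^'n) \<Rightarrow> complex \<times> (complex^'n)" where
  "tr t p = (fst p + complex_of_real (fst t), snd p + snd t)"

lemma linear_Lmap: "linear (Lmap a b)"
proof (rule linearI)
  fix x y show "Lmap a b (x + y) = Lmap a b x + Lmap a b y"
    by (simp add: Lmap_def vec_eq_iff sum.distrib algebra_simps)
next
  fix r :: real and x show "Lmap a b (r *\<^sub>R x) = r *\<^sub>R Lmap a b x"
    by (simp add: Lmap_def vec_eq_iff sum_distrib_left scaleR_sum_right) (simp add: scaleR_conv_of_real algebra_simps)
qed

lemma Lmap_axis: "Lmap a b (axis i 1) = (a$i, \<chi> j. b j $ i)"
proof -
  have "(\<Sum>k\<in>UNIV. axis i 1 $ k * a $ k) = (\<Sum>k\<in>UNIV. if k = i then a $ k else 0)"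
    by (intro sum.cong) (auto simp: axis_def)
  then have "(\<Sum>k\<in>UNIV. axis i 1 $ k * a $ k) = a $ i" by simp
  moreover have "(\<Sum>k\<in>UNIV. complex_of_real (axis i 1 $ k) * b j $ k) = b j $ i" for j
  proof -
    have "(\<Sum>k\<in>UNIV. complex_of_real (axis i 1 $ k) * b j $ k) = (\<Sum>k\<in>UNIV. if k = i then b j $ k else 0)"
      by (intro sum.cong) (auto simp: axis_def)
    then show ?thesis by simp
  qed
  ultimately show ?thesis by (simp add: Lmap_def)
qed

lemma gmap_tr: "gmap a b i = tr (Lmap a b (axis i 1))"
  by (simp add: gmap_def tr_def Lmap_axis fun_eq_iff split: prod.splits)

lemma tr_comp: "tr s \<circ> tr t = tr (s + t)"
  by (simp add: tr_def fun_eq_iff algebra_simps)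

lemma tr_inv: "inv (tr t) = tr (- t)"
proof (rule inv_unique_comp)
  show "tr t \<circ> tr (- t) = id" by (simp add: tr_comp) (simp add: tr_def fun_eq_iff)
  show "tr (- t) \<circ> tr t = id" by (simp add: tr_comp) (simp add: tr_def fun_eq_iff)
qed

lemma tr_step:
  assumes "tr t \<in> H_M a b"
  shows "tr (t + Lmap a b (axis i 1)) \<in> H_M a b" "tr (t - Lmap a b (axis i 1)) \<in> H_M a b"
proof -
  have "gmap a b i \<circ> tr t \<in> H_M a b" using assms unfolding H_M_def by (intro gg_gen) auto
  then show "tr (t + Lmap a b (axis i 1)) \<in> H_M a b" by (simp add: gmap_tr tr_comp add.commute)
  have "inv (gmap a b i) \<circ> tr t \<in> H_M a b" using assms unfolding H_M_def by (intro gg_inv) auto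
  then show "tr (t - Lmap a b (axis i 1)) \<in> H_M a b" by (simp add: gmap_tr tr_comp tr_inv)
qed

lemma tr_int_step:
  assumes "tr t \<in> H_M a b"
  shows "tr (t + of_int c *\<^sub>R Lmap a b (axis i 1)) \<in> H_M a b"
proof (induct c rule: int_induct[where k=0])
  case base then show ?case using assms by simp
next
  case (step1 c)
  then show ?case using tr_step(1)[OF step1(2), of i] by (simp add: algebra_simps)
next
  case (step2 c)
  then show ?case using tr_step(2)[OF step2(2), of i] by (simp add: algebra_simps)
qed

lemma tr_0: "tr 0 \<in> H_M a b"
proof -
  have "tr 0 = id" by (simp add: tr_def fun_eq_iff)
  then show ?thesis unfolding H_M_def using gg_id by metis
qed

lemma tr_int_sum:
  assumes "\<And>i. y $ i \<in> \<int>" "finite F"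
  shows "tr (\<Sum>i\<in>F. y $ i *\<^sub>R Lmap a b (axis i 1)) \<in> H_M a b"
  using assms(2)
proof (induct F rule: finite_induct)
  case empty then show ?case using tr_0 by simp
next
  case (insert i F)
  obtain c where c: "y $ i = of_int c" using assms(1)[of i] Ints_cases by metis
  show ?case using tr_int_step[OF insert(3), of c i] insert(1,2) c by (simp add: add.commute)
qed

lemma tr_int:
  assumes "\<And>i. y $ i \<in> \<int>"
  shows "tr (Lmap a b y) \<in> H_M a b"
proof -
  have "Lmap a b y = Lmap a b (\<Sum>i\<in>UNIV. y $ i *\<^sub>R axis i 1)"
    using basis_expansion[of y] by (simp add: scalar_mult_eq_scaleR)
  also have "\<dots> = (\<Sum>i\<in>UNIV. y $ i *\<^sub>R Lmap a b (axis i 1))"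
    using linear_Lmap[of a b] by (simp add: linear_sum linear_scale)
  finally show ?thesis using tr_int_sum[OF assms] by simp
qed


lemma Lmap_surj:
  fixes a :: "real^'m" and b :: "'n::finite \<Rightarrow> complex^'m"
  assumes span: "vec.span (insert (\<chi> i. complex_of_real (a$i)) (range b \<union> cv ` range b)) = UNIV"
    and dim: "CARD('m) = 2 * CARD('n) + 1"
  shows "surj (Lmap a b)"
proof -
  have "inj (Lmap a b)"
    unfolding linear_injective_0[OF linear_Lmap]
  proof (intro allI impI)
    fix x assume "Lmap a b x = 0"
    then have "(\<Sum>i\<in>UNIV. x$i * a$i) = 0" "\<And>j. (\<Sum>i\<in>UNIV. complex_of_real (x$i) * b j $ i) = 0"
      by (auto simp: Lmap_def vec_eq_iff zero_prod_def)
    then show "x = 0" using L_inj[OF span] by blast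
  qed
  moreover have "dim (UNIV :: (real \<times> (complex^'n)) set) = dim (UNIV :: (real^'m) set)"
    using dim by (simp add: DIM_cart DIM_prod)
  ultimately show ?thesis using linear_injective_imp_surjective[OF linear_Lmap] by metis
qed


lemma det_rmat: "det (rmat (M::int^'m^'m)) = (of_int (det M) :: real)"
  by (simp add: det_def rmat_def of_int_sum of_int_prod)

lemma rmat_integer_inverse:
  fixes M :: "int^'m^'m"
  assumes "det M = 1"
  obtains R :: "real^'m^'m" where "rmat M ** R = mat 1" "R ** rmat M = mat 1" "\<And>i j. R $ i $ j \<in> \<int>"
proof -
  have "invertible (rmat M)" using assms by (simp add: invertible_det_nz det_rmat)
  then obtain R where R: "rmat M ** R = mat 1" "R ** rmat M = mat 1" unfolding invertible_def by blast
  have "R $ k $ j \<in> \<int>" for k j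
  proof -
    let ?x = "R *v axis j 1"
    have mx: "rmat M *v ?x = axis j 1" by (simp add: matrix_vector_mul_assoc R(1))
    let ?N = "(\<chi> i l. if l = k then (if i = j then 1 else 0) else M$i$l) :: int^'m^'m"
    have "(\<chi> i l. if l = k then (rmat M *v ?x)$i else rmat M$i$l) = rmat ?N"
      unfolding mx by (simp add: rmat_def vec_eq_iff axis_def)
    then have "?x $ k = of_int (det ?N)"
      using cramer_lemma[where A="rmat M" and k=k and x="?x"] det_rmat[of M] det_rmat[of ?N] assms by simp
    moreover have "?x $ k = R $ k $ j"
    proof -
      show ?thesis by (simp add: matrix_vector_mult_basis column_def)
    qed
    ultimately have e: "R $ k $ j = of_int (det ?N)" by simp
    show ?thesis unfolding e by (rule Ints_of_int)
  qed
  then show ?thesis using R that by blast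
qed

lemma contraction:
  fixes M :: "int^'m^'m" and a :: "real^'m"
  assumes "det M = 1" "rmat M *v a = \<alpha> *s a" "\<alpha> > 0" "\<alpha> \<noteq> 1"
  shows "\<exists>A \<gamma>. (\<forall>i j. A$i$j \<in> \<int>) \<and> A *v a = \<gamma> *s a \<and> 0 < \<gamma> \<and> \<gamma> < 1"
proof (cases "\<alpha> < 1")
  case True
  have "\<forall>i j. rmat M $ i $ j \<in> \<int>" by (simp add: rmat_def)
  then show ?thesis using True assms by blast
next
  case False
  then have ag: "\<alpha> > 1" using assms by simp
  obtain R where R: "rmat M ** R = mat 1" "R ** rmat M = mat 1" "\<And>i j. R $ i $ j \<in> \<int>"
    using rmat_integer_inverse[OF assms(1)] by blast
  have "R *v (rmat M *v a) = a" by (simp add: matrix_vector_mul_assoc R(2))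
  then have "\<alpha> *s (R *v a) = a" using assms(2) by (simp add: vec.scale)
  then have "R *v a = (1/\<alpha>) *s a" using assms(3) by (auto simp: vec_eq_iff field_simps)
  moreover have "0 < 1/\<alpha>" "1/\<alpha> < 1" using ag by auto
  ultimately show ?thesis using R(3) by blast
qed

lemma small_elems:
  fixes A :: "real^'m^'m" and a :: "real^'m"
  assumes "\<forall>i j. A$i$j \<in> \<int>" "A *v a = \<gamma> *s a" "0 < \<gamma>" "\<gamma> < 1" "a \<noteq> 0"
  shows "\<exists>y. (\<forall>N i. y N $ i \<in> \<int>) \<and> (\<forall>N. (\<Sum>i\<in>UNIV. y N $ i * a$i) \<noteq> 0)
             \<and> ((\<lambda>N. \<Sum>i\<in>UNIV. y N $ i * a$i) \<longlonglongrightarrow> 0)"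
proof -
  obtain i0 where i0: "a $ i0 \<noteq> 0" using assms(5) by (auto simp: vec_eq_iff)
  define y where "y N = ((\<lambda>v. transpose A *v v) ^^ N) (axis i0 1)" for N
  have key: "(\<Sum>i\<in>UNIV. (transpose A *v v) $ i * a$i) = \<gamma> * (\<Sum>i\<in>UNIV. v $ i * a$i)" for v
  proof -
    have "(\<Sum>i\<in>UNIV. (transpose A *v v) $ i * a$i) = (\<Sum>i\<in>UNIV. \<Sum>j\<in>UNIV. A$j$i * v$j * a$i)"
      by (simp add: matrix_vector_mult_def transpose_def sum_distrib_right)
    also have "\<dots> = (\<Sum>j\<in>UNIV. v$j * (\<Sum>i\<in>UNIV. A$j$i * a$i))"
      by (subst sum.swap) (simp add: sum_distrib_left algebra_simps)
    also have "\<dots> = (\<Sum>j\<in>UNIV. v$j * (A *v a)$j)" by (simp add: matrix_vector_mult_def)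
    also have "\<dots> = \<gamma> * (\<Sum>i\<in>UNIV. v $ i * a$i)" using assms(2) by (simp add: sum_distrib_left algebra_simps)
    finally show ?thesis .
  qed
  have yint: "\<forall>i. y N $ i \<in> \<int>" for N
  proof (induct N)
    case 0 then show ?case by (simp add: y_def axis_def)
  next
    case (Suc N)
    have "y (Suc N) = transpose A *v y N" by (simp add: y_def)
    then show ?case using Suc assms(1)
      by (auto simp: matrix_vector_mult_def transpose_def intro!: Ints_sum Ints_mult)
  qed
  have yval: "(\<Sum>i\<in>UNIV. y N $ i * a$i) = \<gamma>^N * a$i0" for N
  proof (induct N)
    case 0
    have "(\<Sum>i\<in>UNIV. axis i0 1 $ i * a$i) = (\<Sum>i\<in>UNIV. if i = i0 then a $ i else 0)"
      by (intro sum.cong) (auto simp: axis_def)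
    then show ?case by (simp add: y_def)
  next
    case (Suc N)
    have "y (Suc N) = transpose A *v y N" by (simp add: y_def)
    then show ?case using Suc key by simp
  qed
  have "(\<lambda>N. \<gamma>^N * a$i0) \<longlonglongrightarrow> 0"
    using assms(3,4) by (intro tendsto_mult_left_zero LIMSEQ_power_zero) auto
  moreover have "\<gamma>^N * a$i0 \<noteq> 0" for N using assms(3) i0 by simp
  ultimately show ?thesis using yint yval by (intro exI[of _ y]) simp
qed


theorem proposition4p1:
  fixes M :: "int^'m^'m" and \<alpha> :: real and a :: "real^'m"
    and b :: "'n::finite \<Rightarrow> complex^'m" and W :: "(complex^'m) set"
    and f :: "complex \<times> (complex^'n) \<Rightarrow> complex"
  assumes dim: "CARD('m) = 2 * CARD('n) + 1"
    and det: "det M = 1"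
    and alpha_eig: "is_eigenvalue (cmat M) (of_real \<alpha>)"
    and only_real: "\<And>l. is_eigenvalue (cmat M) l \<Longrightarrow> Im l = 0 \<Longrightarrow> l = of_real \<alpha>"
    and alpha_pos: "\<alpha> > 0" and alpha_ne1: "\<alpha> \<noteq> 1"
    and alpha_simple: "vec.dim (gen_eigenspace (cmat M) (of_real \<alpha>)) = 1"
    and W_def: "W = vec.span (\<Union>\<beta>\<in>{\<beta>. is_eigenvalue (cmat M) \<beta> \<and> Im \<beta> > 0}.
                               gen_eigenspace (cmat M) \<beta>)"
    and a_eig: "a \<noteq> 0" "rmat M *v a = \<alpha> *s a"
    and b_basis: "inj b" "vec.independent (range b)" "vec.span (range b) = W"
    and holo: "holo_several f HxC"
    and inv: "\<And>g p. g \<in> H_M a b \<Longrightarrow> p \<in> HxC \<Longrightarrow> f (g p) = f p"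
  shows "\<exists>c. \<forall>p\<in>HxC. f p = c"
proof -
  let ?A = "cmat M"
  define aC where "aC = (\<chi> i. complex_of_real (a$i))"
  have HxC_iff: "\<And>p. p \<in> (HxC :: (complex \<times> (complex^'n)) set) \<longleftrightarrow> Im (fst p) > 0"
    by (simp add: HxC_def)
  have ar: "\<And>i. (\<Sum>j\<in>UNIV. real_of_int (M$i$j) * a$j) = \<alpha> * a$i"
    using a_eig(2) by (simp add: rmat_def matrix_vector_mult_def vec_eq_iff)
  have aC_eig: "?A *v aC = complex_of_real \<alpha> *s aC"
  proof -
    have "(\<Sum>j\<in>UNIV. complex_of_int (M$i$j) * complex_of_real (a$j)) = complex_of_real (\<alpha> * a$i)" for i
    proof -
      have "(\<Sum>j\<in>UNIV. complex_of_int (M$i$j) * complex_of_real (a$j))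
            = complex_of_real (\<Sum>j\<in>UNIV. real_of_int (M$i$j) * a$j)"
        by (simp add: of_real_sum)
      then show ?thesis using ar by simp
    qed
    then show ?thesis by (simp add: aC_def cmat_def matrix_vector_mult_def vec_eq_iff)
  qed
  have aK: "aC \<in> Kset ?A {complex_of_real \<alpha>}"
    unfolding Kset_def using aC_eig by (intro CollectI exI[of _ "[complex_of_real \<alpha>]"]) (auto simp: Tm_def)
  have anz: "aC \<noteq> 0" using a_eig(1) by (auto simp: aC_def vec_eq_iff)
  have "W \<subseteq> Kset ?A {l. Im l > 0}"
    unfolding W_def
    by (intro vec.span_minimal[OF _ Kset_subspace] SUP_least gen_Kset) auto
  then have bK: "range b \<subseteq> Kset ?A {l. Im l > 0}"
    using b_basis(3) vec.span_base by blast
  have SP: "vec.span (insert aC (range b \<union> cv ` range b)) = UNIV"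
    by (rule span_all[OF aK _ anz bK b_basis(2) b_basis(1) dim]) simp
  have surjL: "surj (Lmap a b)"
    by (rule Lmap_surj[OF SP[unfolded aC_def] dim])
  have openH: "open (HxC :: (complex \<times> (complex^'n)) set)" using holo by (simp add: holo_several_def)
  have der: "\<And>p. p \<in> HxC \<Longrightarrow> \<exists>f'. (f has_derivative f') (at p) \<and> (\<forall>c w z. f' (c * w, c *s z) = c * f' (w, z))"
    using holo by (simp add: holo_several_def)
  have contf: "continuous_on HxC f"
    by (rule continuous_at_imp_continuous_on) (meson der has_derivative_continuous)
  have invL: "\<And>y p. (\<And>i. y $ i \<in> \<int>) \<Longrightarrow> p \<in> HxC \<Longrightarrow> f (tr (Lmap a b y) p) = f p"
    using inv tr_int by blast
  have bnd: "\<exists>B. \<forall>z. norm (f (w, z)) \<le> B" if w: "Im w > 0" for w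
  proof -
    let ?K = "Lmap a b ` cbox 0 1"
    let ?h = "\<lambda>q::real \<times> (complex^'n). f (w + complex_of_real (fst q), snd q)"
    have cK: "compact ?K"
      by (intro compact_continuous_image linear_continuous_on compact_cbox linear_conv_bounded_linear[THEN iffD1] linear_Lmap)
    have "continuous_on ?K ?h"
    proof (rule continuous_on_compose2[OF contf])
      show "continuous_on ?K (\<lambda>q::real \<times> (complex^'n). (w + complex_of_real (fst q), snd q))"
        by (intro continuous_intros)
      show "(\<lambda>q::real \<times> (complex^'n). (w + complex_of_real (fst q), snd q)) ` ?K \<subseteq> HxC"
        using w by (auto simp: HxC_iff)
    qed
    then have "bounded (?h ` ?K)" using compact_continuous_image cK compact_imp_bounded by blast
    then obtain B where B0: "\<forall>v\<in>?h ` ?K. norm v \<le> B" unfolding bounded_iff by blast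
    have B: "\<And>q. q \<in> ?K \<Longrightarrow> norm (?h q) \<le> B" using B0 by blast
    have "norm (f (w, z)) \<le> B" for z
    proof -
      obtain x where x: "Lmap a b x = (0, z)" using surjL by (metis surjD)
      define y where "y = (\<chi> i. - real_of_int \<lfloor>x$i\<rfloor>)"
      have yint: "\<And>i. y $ i \<in> \<int>" by (simp add: y_def)
      have fr: "(x + y) $ i = frac (x $ i)" for i by (simp add: y_def frac_def)
      have "x + y \<in> cbox 0 1"
        unfolding mem_box_cart fr by (simp add: frac_ge_0 frac_lt_1 less_imp_le)
      then have q: "Lmap a b (x + y) \<in> ?K" by blast
      have LS: "Lmap a b (x + y) = (0, z) + Lmap a b y"
        using linear_add[OF linear_Lmap[of a b], of x y] x by simp
      have "f (w, z) = f (tr (Lmap a b y) (w, z))"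
        using invL[OF yint, of "(w, z)"] w by (simp add: HxC_iff)
      also have "\<dots> = ?h (Lmap a b (x + y))"
        unfolding LS by (simp add: tr_def)
      finally show ?thesis using B[OF q] by simp
    qed
    then show ?thesis by blast
  qed
  have zind: "f (w, z) = f (w, 0)" if w: "Im w > 0" for w z
  proof -
    let ?h = "\<lambda>c::complex. f (w, c *s z)"
    have lin: "linear (\<lambda>d::complex. d *s z)"
      by (rule linearI) (auto simp: vec_eq_iff algebra_simps)
    have fd: "?h field_differentiable (at c)" for c
    proof -
      obtain f' where f': "(f has_derivative f') (at (w, c *s z))" "\<forall>c w z. f' (c * w, c *s z) = c * f' (w, z)"
        using der[of "(w, c *s z)"] w by (auto simp: HxC_iff)
      have g: "((\<lambda>d. (w, d *s z)) has_derivative (\<lambda>d. (0, d *s z))) (at c)"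
        by (intro has_derivative_Pair has_derivative_const bounded_linear_imp_has_derivative lin[unfolded linear_conv_bounded_linear])
      have "(?h has_derivative (\<lambda>d. f' (0, d *s z))) (at c)"
        using has_derivative_compose[OF g f'(1)] by simp
      moreover have "(\<lambda>d. f' (0, d *s z)) = (*) (f' (0, z))"
      proof
        fix d :: complex
        have "f' (0, d *s z) = f' (d * 0, d *s z)" by simp
        also have "\<dots> = d * f' (0, z)" using f'(2) by blast
        finally show "f' (0, d *s z) = f' (0, z) * d" by simp
      qed
      ultimately show ?thesis unfolding field_differentiable_def has_field_derivative_def by metis
    qed
    then have "?h holomorphic_on UNIV" by (simp add: holomorphic_on_def field_differentiable_at_within)
    moreover have "bounded (range ?h)"
    proof -
      obtain B where "\<forall>z. norm (f (w, z)) \<le> B" using bnd[OF w] by blast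
      then show ?thesis unfolding bounded_iff by blast
    qed
    ultimately have "?h constant_on UNIV" by (rule Liouville_theorem)
    then obtain k where "\<forall>c. ?h c = k" by (auto simp: constant_on_def)
    then have "?h 1 = ?h 0" by (metis (no_types))
    moreover have "(1::complex) *s z = z" "(0::complex) *s z = 0" by (simp_all add: vec_eq_iff)
    ultimately show ?thesis by simp
  qed
  define \<phi> where "\<phi> w = f (w, 0)" for w
  have d0: "(\<phi> has_field_derivative 0) (at w)" if w: "Im w > 0" for w
  proof -
    obtain f' where f': "(f has_derivative f') (at (w, 0))" "\<forall>c w z. f' (c * w, c *s z) = c * f' (w, z)"
      using der[of "(w, 0)"] w by (auto simp: HxC_iff)
    have g: "((\<lambda>u. (u, 0::complex^'n)) has_derivative (\<lambda>d. (d, 0))) (at w)"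
      by (intro has_derivative_Pair has_derivative_ident has_derivative_const)
    have "(\<phi> has_derivative (\<lambda>d. f' (d, 0))) (at w)"
      using has_derivative_compose[OF g f'(1)] by (simp add: \<phi>_def[abs_def])
    moreover have "(\<lambda>d. f' (d, 0)) = (*) (f' (1, 0))"
    proof
      fix d :: complex
      have "f' (d, 0) = f' (d * 1, d *s 0)" by simp
      also have "\<dots> = d * f' (1, 0)" using f'(2) by blast
      finally show "f' (d, 0) = f' (1, 0) * d" by simp
    qed
    ultimately have D: "(\<phi> has_field_derivative f' (1,0)) (at w)" by (simp add: has_field_derivative_def)
    obtain A :: "real^'m^'m" and \<gamma> where A: "\<forall>i j. A$i$j \<in> \<int>" "A *v a = \<gamma> *s a" "0 < \<gamma>" "\<gamma> < 1"
      using contraction[OF det a_eig(2) alpha_pos alpha_ne1] by blast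
    obtain y where y: "\<forall>N i. y N $ i \<in> \<int>" "\<forall>N. (\<Sum>i\<in>UNIV. y N $ i * a$i) \<noteq> 0"
        "(\<lambda>N. \<Sum>i\<in>UNIV. y N $ i * a$i) \<longlonglongrightarrow> 0"
      using small_elems[OF A a_eig(1)] by blast
    let ?s = "\<lambda>N. \<Sum>i\<in>UNIV. y N $ i * a$i"
    have per: "\<phi> (w + complex_of_real (?s N)) = \<phi> w" for N
    proof -
      have "f (tr (Lmap a b (y N)) (w, 0)) = f (w, 0)" using invL[of "y N" "(w,0)"] y(1) w by (simp add: HxC_iff)
      moreover have "tr (Lmap a b (y N)) (w, 0) = (w + complex_of_real (?s N), snd (Lmap a b (y N)))"
        by (simp add: tr_def Lmap_def)
      moreover have "f (w + complex_of_real (?s N), snd (Lmap a b (y N))) = f (w + complex_of_real (?s N), 0)"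
        by (rule zind) (use w in simp)
      ultimately show ?thesis by (simp add: \<phi>_def)
    qed
    let ?u = "\<lambda>N. w + complex_of_real (?s N)"
    have fu: "filterlim ?u (at w) sequentially"
      unfolding filterlim_at
    proof
      have ne: "?u N \<noteq> w" for N
      proof
        assume "?u N = w"
        then have "complex_of_real (?s N) = 0" by (metis add_cancel_left_right)
        then have "?s N = 0" by (simp only: of_real_eq_0_iff)
        with y(2) show False by blast
      qed
      show "\<forall>\<^sub>F N in sequentially. ?u N \<in> UNIV \<and> ?u N \<noteq> w" using ne by (intro always_eventually) blast
      have "((\<lambda>N. w + complex_of_real (?s N)) \<longlonglongrightarrow> w + complex_of_real 0)"
        by (intro tendsto_add tendsto_const tendsto_of_real y(3))
      then show "?u \<longlonglongrightarrow> w" by simp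
    qed
    have "((\<lambda>v. (\<phi> v - \<phi> w) / (v - w)) \<longlongrightarrow> f' (1,0)) (at w)" using D has_field_derivative_iff by blast
    from filterlim_compose[OF this fu] have "((\<lambda>N. (\<phi> (?u N) - \<phi> w) / (?u N - w)) \<longlongrightarrow> f' (1,0)) sequentially" .
    then have "(\<lambda>N. 0::complex) \<longlonglongrightarrow> f' (1,0)" using per by simp
    then have "f' (1,0) = 0" by (simp add: LIMSEQ_const_iff)
    then show ?thesis using D by simp
  qed
  have "\<exists>c. \<forall>x\<in>{w. Im w > 0}. \<phi> x = c"
    by (rule has_field_derivative_zero_constant[OF convex_halfspace_Im_gt]) (use d0 has_field_derivative_at_within in blast)
  then obtain c where c: "\<And>x. Im x > 0 \<Longrightarrow> \<phi> x = c" by blast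
  show ?thesis
  proof (intro exI ballI)
    fix p :: "complex \<times> (complex^'n)" assume "p \<in> HxC"
    then have "Im (fst p) > 0" by (simp add: HxC_iff)
    then have "f (fst p, snd p) = c" using zind[of "fst p" "snd p"] c[of "fst p"] by (simp add: \<phi>_def)
    then show "f p = c" by simp
  qed
qed


end
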